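(* Let $P_0=(|P_0|,\preccurlyeq_0)$ be a finite poset with $|P_0|=\{x_1,\dots,x_{m_0}\}$ and let $S\subseteq|P_0|$. Fix nonnegative integer values of $m_i$ for all $i$ with $x_i\notin S$, and consider $L_+(P_0;m_1,\dots,m_{m_0})$ as a function of the remaining variables $(m_i)_{x_i\in S}$ ranging over nonnegative integers. If $S$ is a chain in $P_0$, then (for every choice of the fixed values) this function is given by a polynomial with rational coefficients in the variables $(m_i)_{x_i\in S}$; if $S$ is not a chain, then (for every choice of the fixed values) it is not given by any such polynomial.
   Context: For nonnegative integers $m_1,\dots,m_{m_0}$ let $C_1,\dots,C_{m_0}$ be pairwise disjoint chains, $C_i$ being $x_{i,1}<\dots<x_{i,m_i}$. The lexicographic sum $P=P_0*(C_1,\dots,C_{m_0})$ is the poset on $\bigcup_i|C_i|$ with $x_{i,j}\preccurlyeq x_{i',j'}$ iff either $i\ne i'$ and $x_i\preccurlyeq_0x_{i'}$, or $i=i'$ and $j\le j'$. $L_+(P_0;m_1,\dots,m_{m_0})$ is the number of linearizations (total orders refining $\preccurlyeq$) of $P$. *)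

theory Defs
  imports Complex_Main "HOL-Library.FuncSet"
begin

(* The base poset P_0 has ground set {..<n} (element i plays the role of x_{i+1}),
   with order relation R0 (a set of pairs, reflexive on the ground set). *)

(* ground set of the lexicographic sum P_0 * (C_1,...,C_n): element (i,j) is x_{i,j},
   the j-th element of the chain C_i of length m i *)
definition lexsum_carrier :: "nat \<Rightarrow> (nat \<Rightarrow> nat) \<Rightarrow> (nat \<times> nat) set" where
  "lexsum_carrier n m = Sigma {..<n} (\<lambda>i. {..<m i})"

definition lexsum_rel :: "nat \<Rightarrow> (nat \<times> nat) set \<Rightarrow> (nat \<Rightarrow> nat) \<Rightarrow> ((nat \<times> nat) \<times> (nat \<times> nat)) set" where
  "lexsum_rel n R0 m = {(a, b). a \<in> lexsum_carrier n m \<and> b \<in> lexsum_carrier n m \<and>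
      ((fst a \<noteq> fst b \<and> (fst a, fst b) \<in> R0) \<or> (fst a = fst b \<and> snd a \<le> snd b))}"

definition Lplus :: "nat \<Rightarrow> (nat \<times> nat) set \<Rightarrow> (nat \<Rightarrow> nat) \<Rightarrow> nat" where
  "Lplus n R0 m = card {R. linear_order_on (lexsum_carrier n m) R \<and> lexsum_rel n R0 m \<subseteq> R}"

definition is_chain_in :: "(nat \<times> nat) set \<Rightarrow> nat set \<Rightarrow> bool" where
  "is_chain_in R0 S \<longleftrightarrow> (\<forall>x\<in>S. \<forall>y\<in>S. (x, y) \<in> R0 \<or> (y, x) \<in> R0)"

definition is_rat_poly_in :: "nat set \<Rightarrow> ((nat \<Rightarrow> nat) \<Rightarrow> nat) \<Rightarrow> bool" where
  "is_rat_poly_in S F \<longleftrightarrow> (\<exists>(d::nat) (c :: (nat \<Rightarrow> nat) \<Rightarrow> rat). \<forall>v :: nat \<Rightarrow> nat.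
      of_nat (F v) = (\<Sum>e \<in> PiE S (\<lambda>_. {..d}). c e * (\<Prod>i\<in>S. of_nat (v i) ^ e i)))"

end

theory Submission
  imports Defs "HOL-Real_Asymp.Real_Asymp"
begin


definition lexts :: "'a set \<Rightarrow> 'a rel \<Rightarrow> 'a rel set" where
  "lexts C Q = {R. linear_order_on C R \<and> Q \<subseteq> R}"

definition maxs :: "'a set \<Rightarrow> 'a rel \<Rightarrow> 'a set" where
  "maxs C Q = {z\<in>C. \<forall>a\<in>C. (z,a)\<in>Q \<longrightarrow> a = z}"

lemma lexts_finite: "finite C \<Longrightarrow> finite (lexts C Q)"
proof -
  assume "finite C"
  have "lexts C Q \<subseteq> Pow (C \<times> C)"
    by (auto simp: lexts_def linear_order_on_def partial_order_on_def preorder_on_def)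
  then show ?thesis using \<open>finite C\<close> by (meson finite_Pow_iff finite_SigmaI finite_subset)
qed

lemma lin_greatest_aux:
  assumes "finite F" "F \<noteq> {}" "F \<subseteq> C" "linear_order_on C R"
  shows "\<exists>z\<in>F. \<forall>a\<in>F. (a,z)\<in>R"
  using assms(1,2,3)
proof (induction F rule: finite_ne_induct)
  case (singleton x)
  then show ?case using assms(4) by (auto simp: linear_order_on_def partial_order_on_def preorder_on_def refl_on_def)
next
  case (insert x F)
  then obtain g where g: "g \<in> F" "\<forall>a\<in>F. (a,g)\<in>R" by auto
  have xC: "x \<in> C" "g \<in> C" using insert g by auto
  have tr: "trans R" and rf: "(x,x)\<in>R" and tot: "x = g \<or> (x,g)\<in>R \<or> (g,x)\<in>R"
    using assms(4) xC unfolding linear_order_on_def partial_order_on_def preorder_on_def refl_on_def total_on_def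
    by auto
  show ?case
  proof (cases "(x,g)\<in>R \<or> x = g")
    case True
    then show ?thesis using g rf by auto
  next
    case False
    then have "(g,x)\<in>R" using tot by auto
    show ?thesis
    proof (intro bexI[of _ x] ballI)
      fix a assume "a \<in> insert x F"
      then show "(a,x) \<in> R" using g rf tr \<open>(g,x)\<in>R\<close> by (auto dest: transD)
    qed simp
  qed
qed

lemma lin_greatest:
  assumes "finite C" "C \<noteq> {}" "linear_order_on C R"
  shows "\<exists>z\<in>C. \<forall>a\<in>C. (a,z)\<in>R"
  using lin_greatest_aux[OF assms(1,2) subset_refl assms(3)] .

lemma lin_restrict:
  assumes "linear_order_on C R" "C' \<subseteq> C"
  shows "linear_order_on C' (R \<inter> C' \<times> C')"
  using assms unfolding linear_order_on_def partial_order_on_def preorder_on_def refl_on_def total_on_def trans_def antisym_def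
  by blast

lemma lin_extend:
  assumes "linear_order_on C' R'" "C = insert z C'" "z \<notin> C'"
  shows "linear_order_on C (R' \<union> C \<times> {z})"
  using assms unfolding linear_order_on_def partial_order_on_def preorder_on_def refl_on_def total_on_def trans_def antisym_def
  by blast

lemma card_lexts_rec:
  assumes fin: "finite C" and ne: "C \<noteq> {}" and QC: "Q \<subseteq> C \<times> C"
  shows "card (lexts C Q) = (\<Sum>z\<in>maxs C Q. card (lexts (C - {z}) (Q \<inter> (C - {z}) \<times> (C - {z}))))"
proof -
  define E where "E z = {R\<in>lexts C Q. \<forall>a\<in>C. (a,z)\<in>R}" for z
  have un: "lexts C Q = (\<Union>z\<in>maxs C Q. E z)"
  proof
    show "lexts C Q \<subseteq> (\<Union>z\<in>maxs C Q. E z)"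
    proof
      fix R assume R: "R \<in> lexts C Q"
      then have lo: "linear_order_on C R" "Q \<subseteq> R" by (auto simp: lexts_def)
      obtain z where z: "z \<in> C" "\<forall>a\<in>C. (a,z)\<in>R" using lin_greatest[OF fin ne lo(1)] by blast
      have "antisym R" using lo(1) by (auto simp: linear_order_on_def partial_order_on_def)
      then have "z \<in> maxs C Q" using z lo(2) unfolding maxs_def by (auto dest: antisymD)
      then show "R \<in> (\<Union>z\<in>maxs C Q. E z)" using z R by (auto simp: E_def)
    qed
  qed (auto simp: E_def)
  have disj: "E z \<inter> E z' = {}" if "z \<in> maxs C Q" "z' \<in> maxs C Q" "z \<noteq> z'" for z z'
  proof (rule ccontr)
    assume "E z \<inter> E z' \<noteq> {}"
    then obtain R where R: "R \<in> E z" "R \<in> E z'" by auto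
    then have "antisym R" "(z,z')\<in>R" "(z',z)\<in>R" using that
      by (auto simp: E_def lexts_def linear_order_on_def partial_order_on_def maxs_def)
    then show False using that(3) by (auto dest: antisymD)
  qed
  have finE: "finite (E z)" for z using lexts_finite[OF fin] by (auto simp: E_def)
  have "card (lexts C Q) = (\<Sum>z\<in>maxs C Q. card (E z))"
    unfolding un
    by (rule card_UN_disjoint) (use fin finE disj in \<open>auto simp: maxs_def\<close>)
  also have "\<dots> = (\<Sum>z\<in>maxs C Q. card (lexts (C - {z}) (Q \<inter> (C - {z}) \<times> (C - {z}))))"
  proof (rule sum.cong[OF refl])
    fix z assume zm: "z \<in> maxs C Q"
    define C' where "C' = C - {z}"
    have zC: "z \<in> C" "C = insert z C'" "z \<notin> C'" using zm by (auto simp: maxs_def C'_def)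
    have "bij_betw (\<lambda>R. R \<inter> C' \<times> C') (E z) (lexts C' (Q \<inter> C' \<times> C'))"
    proof (rule bij_betw_byWitness[where f' = "\<lambda>R'. R' \<union> C \<times> {z}"])
      show "\<forall>R\<in>E z. R \<inter> C' \<times> C' \<union> C \<times> {z} = R"
      proof
        fix R assume R: "R \<in> E z"
        then have lo: "linear_order_on C R" "\<forall>a\<in>C. (a,z)\<in>R"
          by (auto simp: E_def lexts_def)
        have sub: "R \<subseteq> C \<times> C" and an: "antisym R" using lo(1)
          by (auto simp: linear_order_on_def partial_order_on_def preorder_on_def)
        show "R \<inter> C' \<times> C' \<union> C \<times> {z} = R"
        proof
          show "R \<subseteq> R \<inter> C' \<times> C' \<union> C \<times> {z}"
          proof
            fix p assume p: "p \<in> R"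
            obtain a b where ab: "p = (a,b)" by force
            have "a \<in> C" "b \<in> C" using p sub ab by auto
            moreover have "a = z \<Longrightarrow> b = z" using p ab lo(2) an \<open>b\<in>C\<close> by (auto dest: antisymD)
            ultimately show "p \<in> R \<inter> C' \<times> C' \<union> C \<times> {z}" using p ab zC by auto
          qed
        qed (use lo in auto)
      qed
      show "\<forall>R'\<in>lexts C' (Q \<inter> C' \<times> C'). (R' \<union> C \<times> {z}) \<inter> C' \<times> C' = R'"
        using zC by (auto simp: lexts_def linear_order_on_def partial_order_on_def preorder_on_def)
      show "(\<lambda>R. R \<inter> C' \<times> C') ` E z \<subseteq> lexts C' (Q \<inter> C' \<times> C')"
        using lin_restrict zC by (fastforce simp: E_def lexts_def)
      show "(\<lambda>R'. R' \<union> C \<times> {z}) ` lexts C' (Q \<inter> C' \<times> C') \<subseteq> E z"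
      proof
        fix R assume "R \<in> (\<lambda>R'. R' \<union> C \<times> {z}) ` lexts C' (Q \<inter> C' \<times> C')"
        then obtain R' where R': "R = R' \<union> C \<times> {z}" "linear_order_on C' R'" "Q \<inter> C' \<times> C' \<subseteq> R'"
          by (auto simp: lexts_def)
        have lo: "linear_order_on C R" using lin_extend[OF R'(2) zC(2,3)] R'(1) by simp
        have "Q \<subseteq> R"
        proof
          fix p assume p: "p \<in> Q"
          obtain a b where ab: "p = (a,b)" by force
          have abC: "a \<in> C" "b \<in> C" using p QC ab by auto
          show "p \<in> R"
          proof (cases "b = z")
            case True then show ?thesis using R' ab abC by auto
          next
            case False
            then have "a \<noteq> z" using zm p ab abC by (auto simp: maxs_def)
            then show ?thesis using False R' ab abC p zC by auto
          qed
        qed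
        then show "R \<in> E z" using lo R'(1) zC by (auto simp: E_def lexts_def)
      qed
    qed
    then show "card (E z) = card (lexts (C - {z}) (Q \<inter> (C - {z}) \<times> (C - {z})))"
      unfolding C'_def by (rule bij_betw_same_card)
  qed
  finally show ?thesis .
qed

lemma Lplus_lexts: "Lplus n R0 m = card (lexts (lexsum_carrier n m) (lexsum_rel n R0 m))"
  by (simp add: Lplus_def lexts_def)

definition Maxi :: "nat \<Rightarrow> (nat \<times> nat) set \<Rightarrow> (nat \<Rightarrow> nat) \<Rightarrow> nat set" where
  "Maxi n R0 m = {i. i < n \<and> 0 < m i \<and> (\<forall>j<n. j \<noteq> i \<and> (i,j)\<in>R0 \<longrightarrow> m j = 0)}"

lemma carrier_remove:
  assumes "i < n" "0 < m i"
  shows "lexsum_carrier n m - {(i, m i - 1)} = lexsum_carrier n (m(i := m i - 1))"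
  using assms by (auto simp: lexsum_carrier_def split: if_splits)

lemma rel_remove:
  assumes "i < n" "0 < m i"
  shows "lexsum_rel n R0 m \<inter> (lexsum_carrier n m - {(i, m i - 1)}) \<times> (lexsum_carrier n m - {(i, m i - 1)})
      = lexsum_rel n R0 (m(i := m i - 1))"
  unfolding carrier_remove[where i=i and n=n and m=m, OF assms] using assms
  by (auto simp: lexsum_rel_def lexsum_carrier_def split: if_splits)

lemma maxs_lexsum:
  "maxs (lexsum_carrier n m) (lexsum_rel n R0 m) = (\<lambda>i. (i, m i - 1)) ` Maxi n R0 m"
proof
  show "maxs (lexsum_carrier n m) (lexsum_rel n R0 m) \<subseteq> (\<lambda>i. (i, m i - 1)) ` Maxi n R0 m"
  proof
    fix z assume z: "z \<in> maxs (lexsum_carrier n m) (lexsum_rel n R0 m)"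
    obtain i j where ij: "z = (i,j)" by force
    have zc: "i < n" "j < m i" using z ij by (auto simp: maxs_def lexsum_carrier_def)
    have mx: "\<forall>a\<in>lexsum_carrier n m. (z,a) \<in> lexsum_rel n R0 m \<longrightarrow> a = z" using z by (auto simp: maxs_def)
    have "j = m i - 1"
    proof (rule ccontr)
      assume "j \<noteq> m i - 1"
      then have "(i, j+1) \<in> lexsum_carrier n m" using zc by (auto simp: lexsum_carrier_def)
      moreover have "(z, (i, j+1)) \<in> lexsum_rel n R0 m" using zc ij calculation
        by (auto simp: lexsum_rel_def lexsum_carrier_def)
      ultimately show False using mx ij by auto
    qed
    moreover have "i \<in> Maxi n R0 m"
      unfolding Maxi_def
    proof (intro CollectI conjI allI impI)
      fix k assume k: "k < n" "k \<noteq> i \<and> (i, k) \<in> R0"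
      show "m k = 0"
      proof (rule ccontr)
        assume "m k \<noteq> 0"
        then have "(k, 0) \<in> lexsum_carrier n m" using k by (auto simp: lexsum_carrier_def)
        moreover have "(z, (k, 0)) \<in> lexsum_rel n R0 m" using zc ij calculation k
          by (auto simp: lexsum_rel_def lexsum_carrier_def)
        ultimately show False using mx ij k by auto
      qed
    qed (use zc in auto)
    ultimately show "z \<in> (\<lambda>i. (i, m i - 1)) ` Maxi n R0 m" using ij by auto
  qed
  show "(\<lambda>i. (i, m i - 1)) ` Maxi n R0 m \<subseteq> maxs (lexsum_carrier n m) (lexsum_rel n R0 m)"
    by (auto simp: Maxi_def maxs_def lexsum_carrier_def lexsum_rel_def)
qed

lemma Lplus_rec:
  assumes "lexsum_carrier n m \<noteq> {}"
  shows "Lplus n R0 m = (\<Sum>i\<in>Maxi n R0 m. Lplus n R0 (m(i := m i - 1)))"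
proof -
  have fin: "finite (lexsum_carrier n m)" by (auto simp: lexsum_carrier_def)
  have QC: "lexsum_rel n R0 m \<subseteq> lexsum_carrier n m \<times> lexsum_carrier n m"
    by (auto simp: lexsum_rel_def)
  have inj: "inj_on (\<lambda>i. (i, m i - 1)) (Maxi n R0 m)" by (auto simp: inj_on_def)
  show ?thesis
    unfolding Lplus_lexts card_lexts_rec[OF fin assms QC] maxs_lexsum sum.reindex[OF inj] o_def
  proof (rule sum.cong[OF refl])
    fix i assume "i \<in> Maxi n R0 m"
    then have i: "i < n" "0 < m i" by (auto simp: Maxi_def)
    show "card (lexts (lexsum_carrier n m - {(i, m i - 1)})
           (lexsum_rel n R0 m \<inter> (lexsum_carrier n m - {(i, m i - 1)}) \<times> (lexsum_carrier n m - {(i, m i - 1)}))) =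
         card (lexts (lexsum_carrier n (m(i := m i - 1))) (lexsum_rel n R0 (m(i := m i - 1))))"
      by (subst rel_remove[where i=i and n=n and m=m, OF i]; subst carrier_remove[where i=i and n=n and m=m, OF i]; rule refl)
  qed
qed



inductive pf :: "nat set \<Rightarrow> ((nat \<Rightarrow> nat) \<Rightarrow> rat) \<Rightarrow> bool" for S where
  pf_const: "pf S (\<lambda>v. c)"
| pf_add: "pf S f \<Longrightarrow> pf S g \<Longrightarrow> pf S (\<lambda>v. f v + g v)"
| pf_var: "i \<in> S \<Longrightarrow> pf S f \<Longrightarrow> pf S (\<lambda>v. of_nat (v i) * f v)"

lemma pf_cong: "pf S f \<Longrightarrow> (\<And>v. f v = g v) \<Longrightarrow> pf S g"
proof -
  assume "pf S f" "\<And>v. f v = g v"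
  then have "f = g" by auto
  then show ?thesis using \<open>pf S f\<close> by simp
qed

lemma pf_mono: "pf S f \<Longrightarrow> S \<subseteq> T \<Longrightarrow> pf T f"
  by (induction rule: pf.induct) (auto intro: pf.intros)

lemma pf_smult: "pf S f \<Longrightarrow> pf S (\<lambda>v. c * f v)"
proof (induction rule: pf.induct)
  case (pf_const c')
  then show ?case by (rule pf.pf_const)
next
  case (pf_add f g)
  show ?case by (rule pf_cong[OF pf.pf_add[OF pf_add.IH]]) (simp add: algebra_simps)
next
  case (pf_var i f)
  show ?case by (rule pf_cong[OF pf.pf_var[OF pf_var.hyps(1) pf_var.IH]]) (simp add: algebra_simps)
qed

lemma pf_diff: "pf S f \<Longrightarrow> pf S g \<Longrightarrow> pf S (\<lambda>v. f v - g v)"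
  by (rule pf_cong[OF pf_add[OF _ pf_smult[where c="-1"]]]) auto

lemma pf_sum: "finite I \<Longrightarrow> (\<And>i. i \<in> I \<Longrightarrow> pf S (f i)) \<Longrightarrow> pf S (\<lambda>v. \<Sum>i\<in>I. f i v)"
proof (induction I rule: finite_induct)
  case empty
  then show ?case using pf_const[of S 0] by simp
next
  case (insert x F)
  then show ?case by (auto intro: pf_cong[OF pf_add])
qed

lemma pf_mult: "pf S f \<Longrightarrow> pf S g \<Longrightarrow> pf S (\<lambda>v. f v * g v)"
proof (induction rule: pf.induct)
  case (pf_const c)
  then show ?case by (rule pf_smult)
next
  case (pf_add f1 f2)
  then show ?case by (auto intro: pf_cong[OF pf.pf_add] simp: algebra_simps)
next
  case (pf_var i f)
  then show ?case by (auto intro: pf_cong[OF pf.pf_var] simp: algebra_simps)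
qed

lemma pf_subst: "pf S f \<Longrightarrow> pf S (\<lambda>v. f (v(s := a)))"
proof (induction rule: pf.induct)
  case (pf_const c)
  then show ?case by (rule pf.pf_const)
next
  case (pf_add f g)
  show ?case using pf.pf_add[OF pf_add.IH] by simp
next
  case (pf_var i f)
  show ?case
  proof (cases "i = s")
    case True
    then show ?thesis using pf_smult[OF pf_var.IH, of "of_nat a"] by simp
  next
    case False
    then show ?thesis using pf.pf_var[OF pf_var.hyps(1) pf_var.IH] by simp
  qed
qed

lemma pf_pow: "i \<in> S \<Longrightarrow> pf S (\<lambda>v. of_nat (v i) ^ k)"
proof (induction k)
  case 0
  then show ?case using pf_const[of S 1] by simp
next
  case (Suc k)
  then show ?case using pf_var[OF Suc.prems Suc.IH[OF Suc.prems]] by simp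
qed

lemma faul_id: "(of_nat X::rat) ^ (Suc a) = (\<Sum>j<X. \<Sum>b\<le>a. of_nat (Suc a choose b) * of_nat j ^ b)"
proof (induction X)
  case 0
  then show ?case by simp
next
  case (Suc X)
  have "(of_nat (Suc X)::rat) ^ (Suc a) = (of_nat X + 1) ^ Suc a" by (simp add: add.commute)
  also have "\<dots> = (\<Sum>k\<le>Suc a. of_nat (Suc a choose k) * of_nat X ^ k * 1 ^ (Suc a - k))"
    by (rule binomial_ring)
  also have "\<dots> = of_nat X ^ Suc a + (\<Sum>b\<le>a. of_nat (Suc a choose b) * of_nat X ^ b)"
    by (simp add: sum.atMost_Suc)
  finally show ?case using Suc.IH by simp
qed

lemma faul_rec: "(of_nat (Suc a)::rat) * (\<Sum>j<X. of_nat j ^ a) =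
   of_nat X ^ Suc a - (\<Sum>b<a. of_nat (Suc a choose b) * (\<Sum>j<X. of_nat j ^ b))"
proof -
  have "(of_nat X::rat) ^ Suc a = (\<Sum>b\<le>a. \<Sum>j<X. of_nat (Suc a choose b) * of_nat j ^ b)"
    unfolding faul_id by (rule sum.swap)
  also have "\<dots> = (\<Sum>b\<le>a. of_nat (Suc a choose b) * (\<Sum>j<X. of_nat j ^ b))"
    by (simp add: sum_distrib_left)
  also have "\<dots> = (\<Sum>b<a. of_nat (Suc a choose b) * (\<Sum>j<X. of_nat j ^ b)) + of_nat (Suc a) * (\<Sum>j<X. of_nat j ^ a)"
    by (simp add: lessThan_Suc_atMost[symmetric])
  finally show ?thesis by simp
qed

lemma pf_faul: "s \<in> S \<Longrightarrow> pf S (\<lambda>v. \<Sum>j<v s. of_nat j ^ a)"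
proof (induction a rule: less_induct)
  case (less a)
  have "pf S (\<lambda>v. (1 / of_nat (Suc a)) * (of_nat (v s) ^ Suc a - (\<Sum>b<a. of_nat (Suc a choose b) * (\<Sum>j<v s. of_nat j ^ b))))"
    by (intro pf_smult pf_diff pf_pow less pf_sum) (auto intro: less.IH less.prems)
  then show ?case
  proof (rule pf_cong)
    fix v
    show "1 / of_nat (Suc a) * (of_nat (v s) ^ Suc a - (\<Sum>b<a. of_nat (Suc a choose b) * (\<Sum>j<v s. of_nat j ^ b)))
      = (\<Sum>j<v s. of_nat j ^ a :: rat)"
      unfolding faul_rec[symmetric] by (simp del: of_nat_Suc)
  qed
qed

lemma pf_sumvar_aux: "pf S g \<Longrightarrow> s \<in> S \<Longrightarrow> pf S (\<lambda>v. \<Sum>j<v s. of_nat j ^ a * g (v(s := j)))"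
proof (induction arbitrary: a rule: pf.induct)
  case (pf_const c)
  then show ?case using pf_smult[OF pf_faul[OF pf_const], of c a]
    by (simp add: sum_distrib_left mult.commute)
next
  case (pf_add f g)
  then show ?case by (auto intro: pf_cong[OF pf.pf_add] simp: algebra_simps sum.distrib)
next
  case (pf_var i f)
  show ?case
  proof (cases "i = s")
    case True
    show ?thesis using pf_var.IH[OF pf_var.prems, of "Suc a"] True
      by (simp add: algebra_simps)
  next
    case False
    show ?thesis using pf.pf_var[OF pf_var.hyps(1) pf_var.IH[OF pf_var.prems, of a]] False
      by (simp add: algebra_simps sum_distrib_left)
  qed
qed

lemma pf_sumvar: "pf S g \<Longrightarrow> s \<in> S \<Longrightarrow> pf S (\<lambda>v. \<Sum>j<v s. g (v(s := j)))"
  using pf_sumvar_aux[of S g s 0] by simp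



definition polyform :: "nat set \<Rightarrow> nat \<Rightarrow> ((nat \<Rightarrow> nat) \<Rightarrow> rat) \<Rightarrow> ((nat \<Rightarrow> nat) \<Rightarrow> rat) \<Rightarrow> bool" where
  "polyform S d c f \<longleftrightarrow> (\<forall>v. f v = (\<Sum>e \<in> PiE S (\<lambda>_. {..d}). c e * (\<Prod>i\<in>S. of_nat (v i) ^ e i)))"

lemma polyform_const: "polyform S 0 (\<lambda>_. a) (\<lambda>v. a)"
proof -
  have "PiE S (\<lambda>_. {..0::nat}) = {\<lambda>i\<in>S. 0}"
    by (subst PiE_eq_singleton) auto
  then show ?thesis by (simp add: polyform_def)
qed

lemma polyform_raise:
  assumes "finite S" "polyform S d c f" "d \<le> d'"
  shows "polyform S d' (\<lambda>e. if e \<in> PiE S (\<lambda>_. {..d}) then c e else 0) f"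
  unfolding polyform_def
proof
  fix v
  have sub: "PiE S (\<lambda>_. {..d}) \<subseteq> PiE S (\<lambda>_. {..d'})" using assms(3) by (intro PiE_mono) auto
  have "(\<Sum>e \<in> PiE S (\<lambda>_. {..d'}). (if e \<in> PiE S (\<lambda>_. {..d}) then c e else 0) * (\<Prod>i\<in>S. of_nat (v i) ^ e i))
     = (\<Sum>e \<in> PiE S (\<lambda>_. {..d}). c e * (\<Prod>i\<in>S. of_nat (v i) ^ e i))"
    by (rule sum.mono_neutral_cong_right) (use assms(1) sub in \<open>auto intro: finite_PiE\<close>)
  then show "f v = (\<Sum>e \<in> PiE S (\<lambda>_. {..d'}). (if e \<in> PiE S (\<lambda>_. {..d}) then c e else 0) * (\<Prod>i\<in>S. of_nat (v i) ^ e i))"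
    using assms(2) by (simp add: polyform_def)
qed

lemma polyform_add:
  assumes "finite S" "polyform S d1 c1 f" "polyform S d2 c2 g"
  shows "\<exists>d c. polyform S d c (\<lambda>v. f v + g v)"
proof -
  define d where "d = max d1 d2"
  obtain c1' c2' where p: "polyform S d c1' f" "polyform S d c2' g"
    using polyform_raise[OF assms(1) assms(2), of d] polyform_raise[OF assms(1) assms(3), of d]
    unfolding d_def by auto
  have "polyform S d (\<lambda>e. c1' e + c2' e) (\<lambda>v. f v + g v)"
    using p by (simp add: polyform_def algebra_simps sum.distrib)
  then show ?thesis by blast
qed

lemma prod_shift:
  assumes "finite S" "i \<in> S"
  shows "(of_nat (v i)::rat) * (\<Prod>j\<in>S. of_nat (v j) ^ e j) = (\<Prod>j\<in>S. of_nat (v j) ^ (e(i := Suc (e i))) j)"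
proof -
  have "(\<Prod>j\<in>S. (of_nat (v j)::rat) ^ e j) = of_nat (v i) ^ e i * (\<Prod>j\<in>S - {i}. of_nat (v j) ^ e j)"
    using assms by (simp add: prod.remove)
  moreover have "(\<Prod>j\<in>S. (of_nat (v j)::rat) ^ (e(i := Suc (e i))) j) =
      of_nat (v i) ^ Suc (e i) * (\<Prod>j\<in>S - {i}. of_nat (v j) ^ (e(i := Suc (e i))) j)"
    using assms by (simp add: prod.remove)
  moreover have "(\<Prod>j\<in>S - {i}. (of_nat (v j)::rat) ^ (e(i := Suc (e i))) j) = (\<Prod>j\<in>S - {i}. of_nat (v j) ^ e j)"
    by (rule prod.cong) auto
  ultimately show ?thesis by simp
qed

lemma polyform_var:
  assumes "finite S" "i \<in> S" "polyform S d c f"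
  shows "\<exists>d c. polyform S d c (\<lambda>v. of_nat (v i) * f v)"
proof -
  define A where "A = PiE S (\<lambda>_. {..d})"
  define sh where "sh e = e(i := Suc (e i))" for e :: "nat \<Rightarrow> nat"
  define c' where "c' e = (if e \<in> sh ` A then c (e(i := e i - 1)) else 0)" for e
  have inj: "inj_on sh A" unfolding inj_on_def sh_def
    by (metis diff_Suc_1 fun_upd_triv fun_upd_upd fun_upd_same)
  have shA: "sh ` A \<subseteq> PiE S (\<lambda>_. {..Suc d})"
    using assms(2) by (auto simp: A_def sh_def PiE_def Pi_def extensional_def)
  have unsh: "(sh e)(i := sh e i - Suc 0) = e" for e by (simp add: sh_def)
  have "polyform S (Suc d) c' (\<lambda>v. of_nat (v i) * f v)"
    unfolding polyform_def
  proof
    fix v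
    have "of_nat (v i) * f v = (\<Sum>e\<in>A. c e * (of_nat (v i) * (\<Prod>j\<in>S. of_nat (v j) ^ e j)))"
      using assms(3) by (simp add: polyform_def A_def sum_distrib_left algebra_simps)
    also have "\<dots> = (\<Sum>e\<in>A. c e * (\<Prod>j\<in>S. of_nat (v j) ^ (sh e) j))"
      using prod_shift[OF assms(1,2)] by (simp add: sh_def)
    also have "\<dots> = (\<Sum>e\<in>sh ` A. c' e * (\<Prod>j\<in>S. of_nat (v j) ^ e j))"
      by (subst sum.reindex[OF inj]) (auto simp: c'_def unsh)
    also have "\<dots> = (\<Sum>e\<in>PiE S (\<lambda>_. {..Suc d}). c' e * (\<Prod>j\<in>S. of_nat (v j) ^ e j))"
      by (rule sum.mono_neutral_cong_left) (use shA assms(1) in \<open>auto simp: c'_def intro: finite_PiE\<close>)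
    finally show "of_nat (v i) * f v = (\<Sum>e\<in>PiE S (\<lambda>_. {..Suc d}). c' e * (\<Prod>j\<in>S. of_nat (v j) ^ e j))" .
  qed
  then show ?thesis by blast
qed

lemma pf_polyform: "pf S f \<Longrightarrow> finite S \<Longrightarrow> \<exists>d c. polyform S d c f"
proof (induction rule: pf.induct)
  case (pf_const c)
  then show ?case using polyform_const by blast
next
  case (pf_add f g)
  then show ?case using polyform_add by blast
next
  case (pf_var i f)
  then show ?case using polyform_var by blast
qed

lemma pf_is_rat_poly: "finite S \<Longrightarrow> pf S (\<lambda>v. of_nat (F v)) \<Longrightarrow> is_rat_poly_in S F"
  unfolding is_rat_poly_in_def using pf_polyform[of S "\<lambda>v. of_nat (F v)"]
  by (auto simp: polyform_def)



definition WMax :: "nat \<Rightarrow> (nat \<times> nat) set \<Rightarrow> nat set \<Rightarrow> (nat \<Rightarrow> nat) \<Rightarrow> nat set" where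
  "WMax n R0 S mfix = {i. i < n \<and> i \<notin> S \<and> 0 < mfix i \<and> (\<forall>j<n. j \<notin> S \<longrightarrow> j \<noteq> i \<and> (i,j)\<in>R0 \<longrightarrow> mfix j = 0)}"

lemma po_props:
  assumes "partial_order_on {..<n} R0"
  shows "R0 \<subseteq> {..<n} \<times> {..<n}" "\<And>i. i < n \<Longrightarrow> (i,i) \<in> R0"
    "\<And>a b c. (a,b) \<in> R0 \<Longrightarrow> (b,c) \<in> R0 \<Longrightarrow> (a,c) \<in> R0"
    "\<And>a b. (a,b) \<in> R0 \<Longrightarrow> (b,a) \<in> R0 \<Longrightarrow> a = b"
  using assms unfolding partial_order_on_def preorder_on_def refl_on_def
  by (auto dest: transD antisymD)

lemma maxi_caseA:
  assumes po: "partial_order_on {..<n} R0" and SS: "S \<subseteq> {..<n}" and s: "s \<in> S" "\<forall>t\<in>S. (t,s)\<in>R0"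
    and i0: "i0 < n" "i0 \<notin> S" "0 < mfix i0" "(s,i0)\<in>R0"
  shows "Maxi n R0 (\<lambda>i. if i \<in> S then v i else mfix i) = WMax n R0 S mfix"
proof -
  note P = po_props[OF po]
  show ?thesis
  proof (intro set_eqI iffI)
    fix i assume i: "i \<in> Maxi n R0 (\<lambda>i. if i \<in> S then v i else mfix i)"
    have iS: "i \<notin> S"
    proof
      assume "i \<in> S"
      then have "(i,i0)\<in>R0" using s i0 P(3) by blast
      then show False using i i0 \<open>i\<in>S\<close> unfolding Maxi_def by force
    qed
    then show "i \<in> WMax n R0 S mfix" using i by (auto simp: Maxi_def WMax_def)
  next
    fix i assume i: "i \<in> WMax n R0 S mfix"
    show "i \<in> Maxi n R0 (\<lambda>i. if i \<in> S then v i else mfix i)"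
      unfolding Maxi_def
    proof (intro CollectI conjI allI impI)
      fix j assume j: "j < n" "j \<noteq> i \<and> (i, j) \<in> R0"
      show "(if j \<in> S then v j else mfix j) = 0"
      proof (cases "j \<in> S")
        case True
        then have "(i,i0) \<in> R0" using P(3) j s i0 by blast
        then have "i0 = i" using i i0 by (auto simp: WMax_def)
        then have "(j,i) \<in> R0" using P(3) True s i0 by blast
        then show ?thesis using P(4) j by blast
      next
        case False
        then show ?thesis using i j by (auto simp: WMax_def)
      qed
    qed (use i in \<open>auto simp: WMax_def\<close>)
  qed
qed

definition WMax' :: "nat \<Rightarrow> (nat \<times> nat) set \<Rightarrow> nat set \<Rightarrow> nat \<Rightarrow> (nat \<Rightarrow> nat) \<Rightarrow> nat set" where
  "WMax' n R0 S s mfix = {i. i < n \<and> i \<notin> S \<and> 0 < mfix i \<and> (i,s) \<notin> R0 \<and> (\<forall>j<n. j \<notin> S \<longrightarrow> j \<noteq> i \<and> (i,j)\<in>R0 \<longrightarrow> mfix j = 0)}"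

lemma maxi_caseB:
  assumes po: "partial_order_on {..<n} R0" and SS: "S \<subseteq> {..<n}" and s: "s \<in> S" "\<forall>t\<in>S. (t,s)\<in>R0"
    and B: "\<forall>i<n. i \<notin> S \<and> (s,i)\<in>R0 \<longrightarrow> mfix i = 0" and vs: "0 < v s"
  shows "Maxi n R0 (\<lambda>i. if i \<in> S then v i else mfix i) = insert s (WMax' n R0 S s mfix)"
proof -
  note P = po_props[OF po]
  show ?thesis
  proof (intro set_eqI iffI)
    fix i assume i: "i \<in> Maxi n R0 (\<lambda>i. if i \<in> S then v i else mfix i)"
    show "i \<in> insert s (WMax' n R0 S s mfix)"
    proof (cases "i = s")
      case False
      have sn: "s < n" using s SS by auto
      have iS: "i \<notin> S"
      proof
        assume "i \<in> S"
        then have "(i,s)\<in>R0" using s by blast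
        then show False using i sn vs False s unfolding Maxi_def by force
      qed
      have "(i,s) \<notin> R0" using i sn vs False s unfolding Maxi_def by force
      then show ?thesis using i iS by (auto simp: Maxi_def WMax'_def)
    qed simp
  next
    fix i assume i: "i \<in> insert s (WMax' n R0 S s mfix)"
    show "i \<in> Maxi n R0 (\<lambda>i. if i \<in> S then v i else mfix i)"
    proof (cases "i = s")
      case True
      show ?thesis unfolding Maxi_def
      proof (intro CollectI conjI allI impI)
        fix j assume j: "j < n" "j \<noteq> i \<and> (i, j) \<in> R0"
        show "(if j \<in> S then v j else mfix j) = 0"
        proof (cases "j \<in> S")
          case True
          then show ?thesis using s j \<open>i = s\<close> P(4) by blast
        next
          case False
          then show ?thesis using B j \<open>i = s\<close> by auto
        qed
      qed (use True s SS vs in auto)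
    next
      case False
      then have i: "i \<in> WMax' n R0 S s mfix" using i by auto
      show ?thesis
        unfolding Maxi_def
      proof (intro CollectI conjI allI impI)
        fix j assume j: "j < n" "j \<noteq> i \<and> (i, j) \<in> R0"
        show "(if j \<in> S then v j else mfix j) = 0"
        proof (cases "j \<in> S")
          case True
          then have "(i,s) \<in> R0" using P(3) j s by blast
          then show ?thesis using i by (auto simp: WMax'_def)
        next
          case False
          then show ?thesis using i j by (auto simp: WMax'_def)
        qed
      qed (use i in \<open>auto simp: WMax'_def\<close>)
    qed
  qed
qed



lemma chain_greatest:
  assumes po: "partial_order_on {..<n} R0" and SS: "S \<subseteq> {..<n}" and ne: "S \<noteq> {}" and ch: "is_chain_in R0 S"
  shows "\<exists>s\<in>S. \<forall>t\<in>S. (t,s)\<in>R0"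
proof -
  note P = po_props[OF po]
  define D where "D s = card {j. j < n \<and> (j,s)\<in>R0}" for s
  obtain s0 where "s0 \<in> S" using ne by auto
  have "D y < Suc n" for y
  proof -
    have "D y \<le> card {..<n}" unfolding D_def by (rule card_mono) auto
    then show ?thesis by simp
  qed
  then have "\<forall>y. y \<in> S \<longrightarrow> D y < Suc n" by blast
  from ex_has_greatest_nat[of "\<lambda>s. s \<in> S", OF \<open>s0 \<in> S\<close> this]
  obtain s where s: "s \<in> S" "\<forall>y. y \<in> S \<longrightarrow> D y \<le> D s" by blast
  have "(t,s) \<in> R0" if t: "t \<in> S" for t
  proof (rule ccontr)
    assume nts: "(t,s) \<notin> R0"
    then have st: "(s,t) \<in> R0" "t \<noteq> s" using ch t s P(2) SS unfolding is_chain_in_def by blast+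
    have "{j. j < n \<and> (j,s)\<in>R0} \<subset> {j. j < n \<and> (j,t)\<in>R0}"
    proof
      show "{j. j < n \<and> (j,s)\<in>R0} \<subseteq> {j. j < n \<and> (j,t)\<in>R0}" using P(3) st by blast
      have "t < n" using t SS by auto
      then show "{j. j < n \<and> (j,s)\<in>R0} \<noteq> {j. j < n \<and> (j,t)\<in>R0}" using P(2) nts by blast
    qed
    then have "D s < D t" unfolding D_def by (intro psubset_card_mono) auto
    then show False using s t by force
  qed
  then show ?thesis using s by blast
qed

lemma sum_dec_less:
  assumes "finite A" "i \<in> A" "0 < (f::nat\<Rightarrow>nat) i"
  shows "(\<Sum>j\<in>A. (f(i := f i - 1)) j) < (\<Sum>j\<in>A. f j)"
proof -
  have "(\<Sum>j\<in>A. (f(i := f i - 1)) j) = (f i - 1) + (\<Sum>j\<in>A - {i}. (f(i := f i - 1)) j)"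
    using assms by (simp add: sum.remove)
  also have "(\<Sum>j\<in>A - {i}. (f(i := f i - 1)) j) = (\<Sum>j\<in>A - {i}. f j)"
    by (rule sum.cong) auto
  also have "(f i - 1) + (\<Sum>j\<in>A - {i}. f j) < f i + (\<Sum>j\<in>A - {i}. f j)" using assms by simp
  also have "\<dots> = (\<Sum>j\<in>A. f j)" using assms by (simp add: sum.remove)
  finally show ?thesis .
qed

lemma sum_shift_id: "(\<Sum>j<k. h (Suc j)) = (\<Sum>j<k. h j) + h k - (h 0 :: rat)"
  by (induction k) auto

lemma chain_pf:
  assumes po: "partial_order_on {..<n} R0"
  shows "S \<subseteq> {..<n} \<Longrightarrow> is_chain_in R0 S \<Longrightarrow>
    pf S (\<lambda>v. of_nat (Lplus n R0 (\<lambda>i. if i \<in> S then v i else mfix i)))"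
proof (induction "(\<Sum>i\<in>{..<n}-S. mfix i) * (n+1) + card S" arbitrary: S mfix rule: less_induct)
  case less
  note P = po_props[OF po]
  have finS: "finite S" using less.prems(1) finite_subset by blast
  show ?case
  proof (cases "S = {}")
    case True
    then show ?thesis using pf_const[of S "of_nat (Lplus n R0 mfix)"] by simp
  next
    case False
    obtain s where s: "s \<in> S" "\<forall>t\<in>S. (t,s)\<in>R0"
      using chain_greatest[OF po less.prems(1) False less.prems(2)] by blast
    have sn: "s < n" using s less.prems(1) by auto
    have IHW: "pf S (\<lambda>v. of_nat (Lplus n R0 (\<lambda>j. if j \<in> S then v j else (mfix(i := mfix i - 1)) j)))"
      if i: "i < n" "i \<notin> S" "0 < mfix i" for i
    proof (rule less.hyps[OF _ less.prems])
      have "(\<Sum>j\<in>{..<n}-S. (mfix(i := mfix i - 1)) j) < (\<Sum>j\<in>{..<n}-S. mfix j)"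
        by (rule sum_dec_less) (use i in auto)
      then show "(\<Sum>j\<in>{..<n}-S. (mfix(i := mfix i - 1)) j) * (n + 1) + card S
          < (\<Sum>j\<in>{..<n}-S. mfix j) * (n + 1) + card S" by (intro add_less_mono1 mult_less_mono1) auto
    qed
    have upd: "(\<lambda>j. if j \<in> S then v j else mfix j)(i := (if i \<in> S then v i else mfix i) - 1)
        = (\<lambda>j. if j \<in> S then v j else (mfix(i := mfix i - 1)) j)" if "i \<notin> S" for i v
      using that by auto
    show ?thesis
    proof (cases "\<exists>i0<n. i0 \<notin> S \<and> 0 < mfix i0 \<and> (s,i0)\<in>R0")
      case True
      then obtain i0 where i0: "i0 < n" "i0 \<notin> S" "0 < mfix i0" "(s,i0)\<in>R0" by blast
      have eq: "Lplus n R0 (\<lambda>i. if i \<in> S then v i else mfix i) =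
          (\<Sum>i\<in>WMax n R0 S mfix. Lplus n R0 (\<lambda>j. if j \<in> S then v j else (mfix(i := mfix i - 1)) j))" for v
      proof -
        have ne: "lexsum_carrier n (\<lambda>i. if i \<in> S then v i else mfix i) \<noteq> {}"
        proof -
          have "(i0,0) \<in> lexsum_carrier n (\<lambda>i. if i \<in> S then v i else mfix i)"
            using i0 by (auto simp: lexsum_carrier_def)
          then show ?thesis by blast
        qed
        show ?thesis
          unfolding Lplus_rec[OF ne] maxi_caseA[where mfix=mfix and v=v, OF po less.prems(1) s i0]
          by (intro sum.cong[OF refl] arg_cong[where f="Lplus n R0"] ext) (auto simp: WMax_def)
      qed
      have "pf S (\<lambda>v. \<Sum>i\<in>WMax n R0 S mfix. of_nat (Lplus n R0 (\<lambda>j. if j \<in> S then v j else (mfix(i := mfix i - 1)) j)))"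
        by (rule pf_sum) (auto simp: WMax_def intro: IHW)
      then show ?thesis by (rule pf_cong) (simp add: eq)
    next
      case False
      then have B: "\<forall>i<n. i \<notin> S \<and> (s,i)\<in>R0 \<longrightarrow> mfix i = 0" by auto
      define G where "G v = (of_nat (Lplus n R0 (\<lambda>i. if i \<in> S then v i else mfix i)) :: rat)" for v
      define H where "H v = (\<Sum>i\<in>WMax' n R0 S s mfix. (of_nat (Lplus n R0 (\<lambda>j. if j \<in> S then v j else (mfix(i := mfix i - 1)) j)) :: rat))" for v
      have pfH: "pf S H" unfolding H_def
        by (rule pf_sum) (auto simp: WMax'_def intro: IHW)
      have rec: "G v = G (v(s := v s - 1)) + H v" if vs: "0 < v s" for v
      proof -
        have ne: "lexsum_carrier n (\<lambda>i. if i \<in> S then v i else mfix i) \<noteq> {}"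
        proof -
          have "(s,0) \<in> lexsum_carrier n (\<lambda>i. if i \<in> S then v i else mfix i)"
            using vs sn s by (auto simp: lexsum_carrier_def)
          then show ?thesis by blast
        qed
        have sW: "s \<notin> WMax' n R0 S s mfix" using s by (auto simp: WMax'_def)
        have fin: "finite (WMax' n R0 S s mfix)" by (auto simp: WMax'_def)
        have u2: "(\<lambda>j. if j \<in> S then v j else mfix j)(s := (if s \<in> S then v s else mfix s) - 1)
          = (\<lambda>j. if j \<in> S then (v(s := v s - 1)) j else mfix j)" using s by auto
        have e1: "Lplus n R0 ((\<lambda>j. if j \<in> S then v j else mfix j)(s := (\<lambda>j. if j \<in> S then v j else mfix j) s - 1))
          = Lplus n R0 (\<lambda>j. if j \<in> S then (v(s := v s - 1)) j else mfix j)"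
          by (intro arg_cong[where f="Lplus n R0"] ext) (use s in auto)
        have e2: "(\<Sum>i\<in>WMax' n R0 S s mfix. Lplus n R0 ((\<lambda>j. if j \<in> S then v j else mfix j)(i := (\<lambda>j. if j \<in> S then v j else mfix j) i - 1)))
          = (\<Sum>i\<in>WMax' n R0 S s mfix. Lplus n R0 (\<lambda>j. if j \<in> S then v j else (mfix(i := mfix i - 1)) j))"
          by (intro sum.cong[OF refl] arg_cong[where f="Lplus n R0"] ext) (auto simp: WMax'_def)
        show ?thesis
          unfolding G_def H_def Lplus_rec[OF ne] maxi_caseB[where mfix=mfix and v=v, OF po less.prems(1) s B vs] sum.insert[OF fin sW]
          unfolding e1 e2 by simp
      qed
      have unroll: "\<forall>v. v s = k \<longrightarrow> G v = G (v(s := 0)) + (\<Sum>j<k. H (v(s := Suc j)))" for k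
      proof (induction k)
        case 0
        then show ?case by (auto simp: fun_upd_idem)
      next
        case (Suc k)
        show ?case
        proof (intro allI impI)
          fix v assume vs: "v s = Suc k"
          have "G v = G (v(s := k)) + H v" using rec[of v] vs by simp
          also have "G (v(s := k)) = G (v(s := 0)) + (\<Sum>j<k. H (v(s := Suc j)))"
            using Suc.IH[rule_format, of "v(s := k)"] by (simp only: fun_upd_upd fun_upd_same)
          also have "H v = H (v(s := Suc k))" using vs by (simp add: fun_upd_idem)
          finally show "G v = G (v(s := 0)) + (\<Sum>j<Suc k. H (v(s := Suc j)))" by (simp only: sum.lessThan_Suc add.assoc)
        qed
      qed
      have pf0: "pf S (\<lambda>v. G (v(s := 0)))"
      proof -
        have m: "(\<Sum>i\<in>{..<n}-(S-{s}). (mfix(s := 0)) i) = (\<Sum>i\<in>{..<n}-S. mfix i)"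
        proof -
          have "{..<n}-(S-{s}) = insert s ({..<n}-S)" using sn by auto
          then have "(\<Sum>i\<in>{..<n}-(S-{s}). (mfix(s := 0)) i) = (mfix(s := 0)) s + (\<Sum>i\<in>{..<n}-S. (mfix(s := 0)) i)"
            using s by (simp add: sum.insert)
          also have "(\<Sum>i\<in>{..<n}-S. (mfix(s := 0)) i) = (\<Sum>i\<in>{..<n}-S. mfix i)"
            by (rule sum.cong) (use s in auto)
          finally show ?thesis by simp
        qed
        have c: "card (S - {s}) < card S" using s finS by (meson card_Diff1_less)
        have "pf (S-{s}) (\<lambda>v. of_nat (Lplus n R0 (\<lambda>i. if i \<in> S-{s} then v i else (mfix(s:=0)) i)))"
        proof (rule less.hyps)
          show "(\<Sum>i\<in>{..<n}-(S-{s}). (mfix(s:=0)) i) * (n+1) + card (S-{s}) < (\<Sum>i\<in>{..<n}-S. mfix i) * (n+1) + card S"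
            using m c by simp
          show "S - {s} \<subseteq> {..<n}" using less.prems(1) by auto
          show "is_chain_in R0 (S-{s})" using less.prems(2) by (auto simp: is_chain_in_def)
        qed
        then have "pf S (\<lambda>v. of_nat (Lplus n R0 (\<lambda>i. if i \<in> S-{s} then v i else (mfix(s:=0)) i)))"
          by (rule pf_mono) auto
        then show ?thesis
        proof (rule pf_cong)
          fix v
          have "(\<lambda>i. if i \<in> S-{s} then v i else (mfix(s:=0)) i) = (\<lambda>i. if i \<in> S then (v(s:=0)) i else mfix i)"
            using s by auto
          then show "of_nat (Lplus n R0 (\<lambda>i. if i \<in> S-{s} then v i else (mfix(s:=0)) i)) = G (v(s := 0))"
            by (simp add: G_def)
        qed
      qed
      have "pf S (\<lambda>v. G (v(s := 0)) + ((\<Sum>j<v s. H (v(s := j))) + H v - H (v(s := 0))))"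
        by (rule pf_add[OF pf0 pf_diff[OF pf_add[OF pf_sumvar[OF pfH s(1)] pfH] pf_subst[OF pfH]]])
      then have "pf S G"
      proof (rule pf_cong)
        fix v
        show "G (v(s := 0)) + ((\<Sum>j<v s. H (v(s := j))) + H v - H (v(s := 0))) = G v"
          using unroll[of "v s"] sum_shift_id[of "\<lambda>j. H (v(s := j))" "v s"] by (simp add: fun_upd_idem)
      qed
      then show ?thesis by (rule pf_cong) (simp add: G_def)
    qed
  qed
qed



lemma maxi_above:
  assumes po: "partial_order_on {..<n} R0" and j: "j < n" "0 < m j"
  shows "\<exists>i\<in>Maxi n R0 m. (j,i)\<in>R0"
proof -
  note P = po_props[OF po]
  define D where "D i = card {k. k < n \<and> (k,i)\<in>R0}" for i
  define A where "A = {i. i < n \<and> 0 < m i \<and> (j,i)\<in>R0}"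
  have jA: "j \<in> A" using j P(2) by (auto simp: A_def)
  have "D y < Suc n" for y
  proof -
    have "D y \<le> card {..<n}" unfolding D_def by (rule card_mono) auto
    then show ?thesis by simp
  qed
  then have "\<forall>y. y \<in> A \<longrightarrow> D y < Suc n" by blast
  from ex_has_greatest_nat[of "\<lambda>i. i \<in> A", OF jA this]
  obtain i where i: "i \<in> A" "\<forall>y. y \<in> A \<longrightarrow> D y \<le> D i" by blast
  have "i \<in> Maxi n R0 m"
    unfolding Maxi_def
  proof (intro CollectI conjI allI impI)
    fix k assume k: "k < n" "k \<noteq> i \<and> (i, k) \<in> R0"
    show "m k = 0"
    proof (rule ccontr)
      assume "m k \<noteq> 0"
      then have kA: "k \<in> A" using k i P(3) by (auto simp: A_def)
      have "{l. l < n \<and> (l,i)\<in>R0} \<subset> {l. l < n \<and> (l,k)\<in>R0}"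
      proof
        show "{l. l < n \<and> (l,i)\<in>R0} \<subseteq> {l. l < n \<and> (l,k)\<in>R0}" using P(3) k by blast
        have "(k,i) \<notin> R0" using P(4) k by blast
        then show "{l. l < n \<and> (l,i)\<in>R0} \<noteq> {l. l < n \<and> (l,k)\<in>R0}" using P(2) k by blast
      qed
      then have "D i < D k" unfolding D_def by (intro psubset_card_mono) auto
      then show False using i kA by force
    qed
  qed (use i in \<open>auto simp: A_def\<close>)
  then show ?thesis using i by (auto simp: A_def)
qed

lemma Lplus_empty:
  assumes "lexsum_carrier n m = {}"
  shows "Lplus n R0 m = 1"
proof -
  have "{R. linear_order_on (lexsum_carrier n m) R \<and> lexsum_rel n R0 m \<subseteq> R} = {{}}"
    using assms by (auto simp: linear_order_on_def partial_order_on_def preorder_on_def lexsum_rel_def)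
  then show ?thesis by (simp add: Lplus_def)
qed

lemma Lplus_ge:
  assumes po: "partial_order_on {..<n} R0" and xy: "x < n" "y < n" "(x,y) \<notin> R0" "(y,x) \<notin> R0"
  shows "2 ^ min (m x) (m y) \<le> Lplus n R0 m"
proof (induction "\<Sum>i<n. m i" arbitrary: m rule: less_induct)
  case less
  note P = po_props[OF po]
  have IH: "2 ^ min ((m(i := m i - 1)) x) ((m(i := m i - 1)) y) \<le> Lplus n R0 (m(i := m i - 1))"
    if i: "i \<in> Maxi n R0 m" for i
  proof (rule less.hyps)
    have "i < n" "0 < m i" using i by (auto simp: Maxi_def)
    then show "(\<Sum>j<n. (m(i := m i - 1)) j) < (\<Sum>j<n. m j)"
      by (intro sum_dec_less) auto
  qed
  have le_term: "Lplus n R0 (m(i := m i - 1)) \<le> Lplus n R0 m" if i: "i \<in> Maxi n R0 m" for i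
  proof -
    have ne: "lexsum_carrier n m \<noteq> {}"
    proof -
      have "(i,0) \<in> lexsum_carrier n m" using i by (auto simp: Maxi_def lexsum_carrier_def)
      then show ?thesis by blast
    qed
    have fin: "finite (Maxi n R0 m)" by (auto simp: Maxi_def)
    show ?thesis unfolding Lplus_rec[OF ne, of R0]
      by (rule member_le_sum[OF i _ fin]) simp
  qed
  have pos: "1 \<le> Lplus n R0 m" for m
  proof (induction "\<Sum>i<n. m i" arbitrary: m rule: less_induct)
    case less
    show ?case
    proof (cases "lexsum_carrier n m = {}")
      case True
      then show ?thesis by (simp add: Lplus_empty)
    next
      case False
      then obtain j k where jk: "j < n" "k < m j" by (auto simp: lexsum_carrier_def)
      then obtain i where i: "i \<in> Maxi n R0 m" using maxi_above[OF po, of j m] by auto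
      have fin: "finite (Maxi n R0 m)" by (auto simp: Maxi_def)
      have "1 \<le> Lplus n R0 (m(i := m i - 1))"
      proof (rule less.hyps)
        have "i < n" "0 < m i" using i by (auto simp: Maxi_def)
        then show "(\<Sum>j<n. (m(i := m i - 1)) j) < (\<Sum>j<n. m j)"
          by (intro sum_dec_less) auto
      qed
      also have "\<dots> \<le> Lplus n R0 m" unfolding Lplus_rec[OF False, of R0]
        by (rule member_le_sum[OF i _ fin]) simp
      finally show ?thesis .
    qed
  qed
  show ?case
  proof (cases "m x = 0 \<or> m y = 0")
    case True
    then show ?thesis using pos[of m] by auto
  next
    case False
    then have mx: "0 < m x" "0 < m y" by auto
    show ?thesis
    proof (cases "\<exists>i\<in>Maxi n R0 m. i \<noteq> x \<and> i \<noteq> y")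
      case True
      then obtain i where i: "i \<in> Maxi n R0 m" "i \<noteq> x" "i \<noteq> y" by blast
      have "2 ^ min (m x) (m y) = 2 ^ min ((m(i := m i - 1)) x) ((m(i := m i - 1)) y)" using i by simp
      also have "\<dots> \<le> Lplus n R0 (m(i := m i - 1))" by (rule IH[OF i(1)])
      also have "\<dots> \<le> Lplus n R0 m" by (rule le_term[OF i(1)])
      finally show ?thesis .
    next
      case False
      then have sub: "Maxi n R0 m \<subseteq> {x,y}" by auto
      obtain i1 where i1: "i1 \<in> Maxi n R0 m" "(x,i1)\<in>R0" using maxi_above[where m=m, OF po xy(1) mx(1)] by blast
      obtain i2 where i2: "i2 \<in> Maxi n R0 m" "(y,i2)\<in>R0" using maxi_above[where m=m, OF po xy(2) mx(2)] by blast
      have xM: "x \<in> Maxi n R0 m" using i1 sub xy by auto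
      have yM: "y \<in> Maxi n R0 m" using i2 sub xy by auto
      have xy_ne: "x \<noteq> y" using xy P(2) by auto
      have ne: "lexsum_carrier n m \<noteq> {}"
      proof -
        have "(x,0) \<in> lexsum_carrier n m" using xy mx by (auto simp: lexsum_carrier_def)
        then show ?thesis by blast
      qed
      have fin: "finite (Maxi n R0 m)" by (auto simp: Maxi_def)
      have "Lplus n R0 (m(x := m x - 1)) + Lplus n R0 (m(y := m y - 1))
          = (\<Sum>i\<in>{x,y}. Lplus n R0 (m(i := m i - 1)))" using xy_ne by simp
      also have "\<dots> \<le> (\<Sum>i\<in>Maxi n R0 m. Lplus n R0 (m(i := m i - 1)))"
        by (rule sum_mono2[OF fin]) (use xM yM in auto)
      also have "\<dots> = Lplus n R0 m" using Lplus_rec[OF ne, of R0] by simp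
      finally have sum: "Lplus n R0 (m(x := m x - 1)) + Lplus n R0 (m(y := m y - 1)) \<le> Lplus n R0 m" .
      have a: "2 ^ min (m x - 1) (m y) \<le> Lplus n R0 (m(x := m x - 1))"
        using IH[OF xM] xy_ne by simp
      have b: "2 ^ min (m x) (m y - 1) \<le> Lplus n R0 (m(y := m y - 1))"
        using IH[OF yM] xy_ne by simp
      have "(2::nat) ^ min (m x) (m y) \<le> 2 ^ min (m x - 1) (m y) + 2 ^ min (m x) (m y - 1)"
      proof -
        obtain a' b' where ab: "m x = Suc a'" "m y = Suc b'" using mx by (metis gr0_implies_Suc)
        show ?thesis
        proof (cases a' b' rule: linorder_cases)
          case less
          then show ?thesis using ab by (simp add: min_def)
        next
          case equal
          then show ?thesis using ab by (simp add: min_def)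
        next
          case greater
          then show ?thesis using ab by (simp add: min_def)
        qed
      qed
      then show ?thesis using a b sum by linarith
    qed
  qed
qed



lemma poly_bound:
  assumes finS: "finite S" and vk: "\<And>i. v i \<le> k"
  shows "\<bar>\<Sum>e \<in> PiE S (\<lambda>_. {..d}). c e * (\<Prod>i\<in>S. (of_nat (v i) :: rat) ^ e i)\<bar>
     \<le> (\<Sum>e \<in> PiE S (\<lambda>_. {..d}). \<bar>c e\<bar>) * (of_nat k + 1) ^ (d * card S)"
proof -
  have pb: "(\<Prod>i\<in>S. (of_nat (v i) :: rat) ^ e i) \<le> (of_nat k + 1) ^ (d * card S)"
    if e: "e \<in> PiE S (\<lambda>_. {..d})" for e
  proof -
    have "(\<Prod>i\<in>S. (of_nat (v i) :: rat) ^ e i) \<le> (\<Prod>i\<in>S. (of_nat k + 1) ^ d)"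
    proof (rule prod_mono)
      fix i assume i: "i \<in> S"
      have ei: "e i \<le> d" using e i by (auto simp: PiE_def Pi_def)
      have "(of_nat (v i) :: rat) ^ e i \<le> (of_nat k + 1) ^ e i"
        by (rule power_mono) (use vk[of i] in auto)
      also have "\<dots> \<le> (of_nat k + 1) ^ d"
        by (rule power_increasing[OF ei]) simp
      finally show "0 \<le> (of_nat (v i) :: rat) ^ e i \<and> (of_nat (v i) :: rat) ^ e i \<le> (of_nat k + 1) ^ d"
        by simp
    qed
    also have "\<dots> = (of_nat k + 1) ^ (d * card S)" by (simp add: power_mult)
    finally show ?thesis .
  qed
  have "\<bar>\<Sum>e \<in> PiE S (\<lambda>_. {..d}). c e * (\<Prod>i\<in>S. (of_nat (v i) :: rat) ^ e i)\<bar>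
      \<le> (\<Sum>e \<in> PiE S (\<lambda>_. {..d}). \<bar>c e * (\<Prod>i\<in>S. (of_nat (v i) :: rat) ^ e i)\<bar>)"
    by (rule sum_abs)
  also have "\<dots> \<le> (\<Sum>e \<in> PiE S (\<lambda>_. {..d}). \<bar>c e\<bar> * (of_nat k + 1) ^ (d * card S))"
  proof (rule sum_mono)
    fix e assume e: "e \<in> PiE S (\<lambda>_. {..d})"
    have "\<bar>c e * (\<Prod>i\<in>S. (of_nat (v i) :: rat) ^ e i)\<bar> = \<bar>c e\<bar> * (\<Prod>i\<in>S. (of_nat (v i) :: rat) ^ e i)"
      by (simp add: abs_mult prod_nonneg)
    also have "\<dots> \<le> \<bar>c e\<bar> * (of_nat k + 1) ^ (d * card S)"
      by (rule mult_left_mono[OF pb[OF e]]) simp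
    finally show "\<bar>c e * (\<Prod>i\<in>S. (of_nat (v i) :: rat) ^ e i)\<bar> \<le> \<bar>c e\<bar> * (of_nat k + 1) ^ (d * card S)" .
  qed
  also have "\<dots> = (\<Sum>e \<in> PiE S (\<lambda>_. {..d}). \<bar>c e\<bar>) * (of_nat k + 1) ^ (d * card S)"
    by (simp add: sum_distrib_right)
  finally show ?thesis .
qed

lemma poly_vs_exp: "\<exists>k::nat. (C::real) * (real k + 1) ^ D < 2 ^ k"
proof -
  have lim: "((\<lambda>k::nat. C * (real k + 1)^D / 2^k) \<longlongrightarrow> 0) at_top"
    by real_asymp
  have "eventually (\<lambda>k. C * (real k + 1)^D / 2^k < 1) at_top"
    using order_tendstoD(2)[OF lim, of 1] by simp
  then obtain N where N: "\<forall>k\<ge>N. C * (real k + 1)^D / 2^k < 1" by (auto simp: eventually_at_top_linorder)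
  then have "C * (real N + 1)^D / 2^N < 1" by simp
  then have "C * (real N + 1)^D < 2^N" by (simp add: divide_less_eq)
  then show ?thesis by blast
qed

theorem theorem5p2:
  fixes n :: nat and R0 :: "(nat \<times> nat) set" and S :: "nat set"
  assumes "partial_order_on {..<n} R0"
    and "S \<subseteq> {..<n}"
  shows "(is_chain_in R0 S \<longrightarrow>
            (\<forall>mfix :: nat \<Rightarrow> nat. is_rat_poly_in S (\<lambda>v. Lplus n R0 (\<lambda>i. if i \<in> S then v i else mfix i))))
       \<and> (\<not> is_chain_in R0 S \<longrightarrow>
            (\<forall>mfix :: nat \<Rightarrow> nat. \<not> is_rat_poly_in S (\<lambda>v. Lplus n R0 (\<lambda>i. if i \<in> S then v i else mfix i))))"
proof (intro conjI impI allI)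
  have finS: "finite S" using assms(2) finite_subset by blast
  {
    fix mfix :: "nat \<Rightarrow> nat"
    assume ch: "is_chain_in R0 S"
    show "is_rat_poly_in S (\<lambda>v. Lplus n R0 (\<lambda>i. if i \<in> S then v i else mfix i))"
      by (rule pf_is_rat_poly[OF finS chain_pf[OF assms(1) assms(2) ch]])
  }
  fix mfix :: "nat \<Rightarrow> nat"
  assume nch: "\<not> is_chain_in R0 S"
  then obtain x y where xy: "x \<in> S" "y \<in> S" "(x,y) \<notin> R0" "(y,x) \<notin> R0"
    unfolding is_chain_in_def by blast
  have xyn: "x < n" "y < n" using xy assms(2) by auto
  show "\<not> is_rat_poly_in S (\<lambda>v. Lplus n R0 (\<lambda>i. if i \<in> S then v i else mfix i))"
  proof
    assume "is_rat_poly_in S (\<lambda>v. Lplus n R0 (\<lambda>i. if i \<in> S then v i else mfix i))"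
    then obtain d c where dc: "\<forall>v. (of_nat (Lplus n R0 (\<lambda>i. if i \<in> S then v i else mfix i)) :: rat)
        = (\<Sum>e \<in> PiE S (\<lambda>_. {..d}). c e * (\<Prod>i\<in>S. of_nat (v i) ^ e i))"
      unfolding is_rat_poly_in_def by blast
    define C where "C = (\<Sum>e \<in> PiE S (\<lambda>_. {..d}). \<bar>c e\<bar>)"
    have bnd: "(2::rat) ^ k \<le> C * (of_nat k + 1) ^ (d * card S)" for k
    proof -
      define v where "v i = (if i = x \<or> i = y then k else 0)" for i
      have vk: "\<And>i. v i \<le> k" by (simp add: v_def)
      have "2 ^ min ((\<lambda>i. if i \<in> S then v i else mfix i) x) ((\<lambda>i. if i \<in> S then v i else mfix i) y)
          \<le> Lplus n R0 (\<lambda>i. if i \<in> S then v i else mfix i)"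
        by (rule Lplus_ge[OF assms(1) xyn xy(3,4)])
      then have "2 ^ k \<le> Lplus n R0 (\<lambda>i. if i \<in> S then v i else mfix i)"
        using xy by (simp add: v_def)
      then have "(2::rat) ^ k \<le> of_nat (Lplus n R0 (\<lambda>i. if i \<in> S then v i else mfix i))"
        by (metis of_nat_le_iff of_nat_numeral of_nat_power)
      also have "\<dots> \<le> \<bar>of_nat (Lplus n R0 (\<lambda>i. if i \<in> S then v i else mfix i))\<bar>" by simp
      also have "\<dots> \<le> C * (of_nat k + 1) ^ (d * card S)"
        unfolding dc[rule_format] C_def by (rule poly_bound[OF finS vk])
      finally show ?thesis .
    qed
    obtain k where k: "real_of_rat C * (real k + 1) ^ (d * card S) < 2 ^ k"
      using poly_vs_exp by blast
    have "real_of_rat ((2::rat) ^ k) \<le> real_of_rat (C * (of_nat k + 1) ^ (d * card S))"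
      using bnd[of k] of_rat_less_eq by blast
    then have "(2::real) ^ k \<le> real_of_rat C * (real k + 1) ^ (d * card S)"
      by (simp add: of_rat_mult of_rat_power of_rat_add)
    then show False using k by linarith
  qed
qed

end
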